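(* Let $f$ be a pairwise social choice correspondence that satisfies strong Condorcet-consistency, homogeneity, strategyproofness, and $4\le k_f\le m$, and let $R,R'$ be profiles with $\mathrm{TC}(R)=\mathrm{TC}(R')$ and $|\mathrm{TC}(R)|=k_f$. Suppose there are a set $X\subseteq f(R)\cap\mathrm{TC}(R)$ and an alternative $y\in(f(R)\cap\mathrm{TC}(R))\setminus X$ such that $g_{R'}(x,y)=2+g_R(x,y)$ for all $x\in X$, and $g_{R'}(x',y')=g_R(x',y')$ for all other pairs of alternatives (i.e., all pairs $(x',y')$ other than $(x,y)$ and $(y,x)$ with $x\in X$). Then $f(R)=f(R')$ or $f(R')\cap\mathrm{TC}(R')=\mathrm{TC}(R')\setminus\{y\}$.
   Context: Let $A$ be a finite set of $m$ alternatives; a preference profile $R$ assigns a strict total order $\succ_i$ on $A$ to each voter $i$ of a finite non-empty electorate $N\subseteq\{1,2,\dots\}$; $\mathcal{R}^*(A)$ is the set of all profiles. $g_R(x,y)=|\{i: x\succ_i y\}|-|\{i: y\succ_i x\}|$; $x\succsim_R y$ iff $g_R(x,y)\ge0$, strict part $\succ_R$. A Condorcet winner is $x$ with $x\succ_R y$ for all $y\ne x$. A non-empty $X$ is dominant if $x\succ_R y$ for all $x\in X,y\notin X$; $\mathrm{TC}(R)$ is the inclusion-smallest dominant set. An SCC is $f:\mathcal{R}^*(A)\to 2^A\setminus\{\emptyset\}$; pairwise: $f(R)=f(R')$ whenever $g_R=g_{R'}$; homogeneous: $f(kR)=f(R)$ for $k$ copies $kR$ of $R$; strongly Condorcet-consistent: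 $f(R)=\{x\}$ iff $x$ is the Condorcet winner. Fishburn's extension: for $X\ne Y$, $X\succ_i^F Y$ iff $x\succ_i y$ for all $x\in X\setminus Y,y\in Y$ and for all $x\in X,y\in Y\setminus X$; $f$ is strategyproof if no voter $i$ can change only his own preference to move from $R$ to $R'$ with $f(R')\succ_i^F f(R)$. For an SCC $f$, $k_f\in\{1,\dots,m+1\}$ is the maximal value such that $\mathrm{TC}(R)\subseteq f(R)$ for all profiles $R$ with $|\mathrm{TC}(R)|<k_f$. *)

theory Defs
  imports Main
begin

text \<open>A profile assigns to each voter (a positive natural number) either None
  (not in the electorate) or Some r, r a strict total order on the alternatives A.\<close>
type_synonym 'a profile = "nat \<Rightarrow> ('a \<times> 'a) set option"

definition electorate :: "'a profile \<Rightarrow> nat set" where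
  "electorate R = {i. R i \<noteq> None}"

definition is_profile :: "'a set \<Rightarrow> 'a profile \<Rightarrow> bool" where
  "is_profile A R \<longleftrightarrow> finite (electorate R) \<and> electorate R \<noteq> {} \<and> 0 \<notin> electorate R \<and>
     (\<forall>i r. R i = Some r \<longrightarrow> r \<subseteq> A \<times> A \<and> strict_linear_order_on A r)"

definition prefers :: "'a profile \<Rightarrow> nat \<Rightarrow> 'a \<Rightarrow> 'a \<Rightarrow> bool" where
  "prefers R i x y = (case R i of None \<Rightarrow> False | Some r \<Rightarrow> (x, y) \<in> r)"

definition g :: "'a profile \<Rightarrow> 'a \<Rightarrow> 'a \<Rightarrow> int" where
  "g R x y = int (card {i \<in> electorate R. prefers R i x y})
             - int (card {i \<in> electorate R. prefers R i y x})"

definition maj_weak :: "'a profile \<Rightarrow> 'a \<Rightarrow> 'a \<Rightarrow> bool" where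
  "maj_weak R x y \<longleftrightarrow> g R x y \<ge> 0"

definition maj_strict :: "'a profile \<Rightarrow> 'a \<Rightarrow> 'a \<Rightarrow> bool" where
  "maj_strict R x y \<longleftrightarrow> maj_weak R x y \<and> \<not> maj_weak R y x"

definition condorcet_winner :: "'a set \<Rightarrow> 'a profile \<Rightarrow> 'a \<Rightarrow> bool" where
  "condorcet_winner A R x \<longleftrightarrow> x \<in> A \<and> (\<forall>y\<in>A. y \<noteq> x \<longrightarrow> maj_strict R x y)"

definition dominant :: "'a set \<Rightarrow> 'a profile \<Rightarrow> 'a set \<Rightarrow> bool" where
  "dominant A R X \<longleftrightarrow> X \<noteq> {} \<and> X \<subseteq> A \<and> (\<forall>x\<in>X. \<forall>y\<in>A - X. maj_strict R x y)"

definition TC :: "'a set \<Rightarrow> 'a profile \<Rightarrow> 'a set" where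
  "TC A R = (THE X. dominant A R X \<and> (\<forall>Y. dominant A R Y \<longrightarrow> X \<subseteq> Y))"

definition is_scc :: "'a set \<Rightarrow> ('a profile \<Rightarrow> 'a set) \<Rightarrow> bool" where
  "is_scc A f \<longleftrightarrow> (\<forall>R. is_profile A R \<longrightarrow> f R \<noteq> {} \<and> f R \<subseteq> A)"

definition pairwise_scc :: "'a set \<Rightarrow> ('a profile \<Rightarrow> 'a set) \<Rightarrow> bool" where
  "pairwise_scc A f \<longleftrightarrow> (\<forall>R R'. is_profile A R \<longrightarrow> is_profile A R' \<longrightarrow>
      (\<forall>x\<in>A. \<forall>y\<in>A. g R x y = g R' x y) \<longrightarrow> f R = f R')"

definition copies :: "nat \<Rightarrow> 'a profile \<Rightarrow> 'a profile" where
  "copies k R = (\<lambda>i. if i = 0 then None else R ((i - 1) div k + 1))"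

definition homogeneous :: "'a set \<Rightarrow> ('a profile \<Rightarrow> 'a set) \<Rightarrow> bool" where
  "homogeneous A f \<longleftrightarrow> (\<forall>R k. is_profile A R \<longrightarrow> k \<ge> 1 \<longrightarrow> f (copies k R) = f R)"

definition strongly_condorcet_consistent :: "'a set \<Rightarrow> ('a profile \<Rightarrow> 'a set) \<Rightarrow> bool" where
  "strongly_condorcet_consistent A f \<longleftrightarrow>
     (\<forall>R x. is_profile A R \<longrightarrow> (f R = {x} \<longleftrightarrow> condorcet_winner A R x))"

definition fishburn :: "('a \<times> 'a) set \<Rightarrow> 'a set \<Rightarrow> 'a set \<Rightarrow> bool" where
  "fishburn r X Y \<longleftrightarrow> X \<noteq> Y \<and> (\<forall>x\<in>X - Y. \<forall>y\<in>Y. (x, y) \<in> r)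
                              \<and> (\<forall>x\<in>X. \<forall>y\<in>Y - X. (x, y) \<in> r)"

definition strategyproof :: "'a set \<Rightarrow> ('a profile \<Rightarrow> 'a set) \<Rightarrow> bool" where
  "strategyproof A f \<longleftrightarrow> (\<forall>R R' i r. is_profile A R \<longrightarrow> is_profile A R' \<longrightarrow>
      R i = Some r \<longrightarrow> R' i \<noteq> None \<longrightarrow> (\<forall>j. j \<noteq> i \<longrightarrow> R' j = R j) \<longrightarrow>
      \<not> fishburn r (f R') (f R))"

definition kf :: "'a set \<Rightarrow> ('a profile \<Rightarrow> 'a set) \<Rightarrow> nat" where
  "kf A f = Max {k \<in> {1..card A + 1}. \<forall>R. is_profile A R \<longrightarrow> card (TC A R) < k \<longrightarrow> TC A R \<subseteq> f R}"

end

theory Submission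
  imports Defs
begin

lemma maj_strict_asym: "maj_strict R a b \<Longrightarrow> \<not> maj_strict R b a"
  by (simp add: maj_strict_def)

lemma dominant_chain:
  assumes "dominant A R X" "dominant A R Y"
  shows "X \<subseteq> Y \<or> Y \<subseteq> X"
proof (rule ccontr)
  assume "\<not> (X \<subseteq> Y \<or> Y \<subseteq> X)"
  then obtain a b where a: "a \<in> X" "a \<notin> Y" and b: "b \<in> Y" "b \<notin> X" by blast
  have "maj_strict R a b" using assms(1) a b assms(2) unfolding dominant_def by blast
  moreover have "maj_strict R b a" using assms a b unfolding dominant_def by blast
  ultimately show False using maj_strict_asym by metis
qed

lemma TC_props:
  assumes "finite A" "A \<noteq> {}"
  shows "dominant A R (TC A R) \<and> (\<forall>Y. dominant A R Y \<longrightarrow> TC A R \<subseteq> Y)"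
proof -
  let ?D = "{X. dominant A R X}"
  have "dominant A R A" using assms unfolding dominant_def by auto
  then have ne: "card ` ?D \<noteq> {}" by blast
  define m where "m = Min (card ` ?D)"
  have fin: "finite ?D"
    by (rule finite_subset[of _ "Pow A"]) (use assms(1) in \<open>auto simp: dominant_def\<close>)
  have "m \<in> card ` ?D" unfolding m_def using fin ne by (intro Min_in) auto
  then obtain X0 where X0: "dominant A R X0" "card X0 = m" by blast
  have min: "\<forall>Y. dominant A R Y \<longrightarrow> X0 \<subseteq> Y"
  proof (intro allI impI)
    fix Y assume Y: "dominant A R Y"
    have "m \<le> card Y" unfolding m_def using fin Y by (intro Min_le) auto
    moreover have "finite Y" using Y assms(1) by (auto simp: dominant_def intro: finite_subset)
    moreover have "finite X0" using X0(1) assms(1) by (auto simp: dominant_def intro: finite_subset)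
    ultimately show "X0 \<subseteq> Y" using dominant_chain[OF X0(1) Y] X0(2)
      by (metis card_seteq order_refl)
  qed
  have "TC A R = X0" unfolding TC_def
    by (rule the_equality) (use X0 min in auto)
  then show ?thesis using X0 min by simp
qed

definition cv :: "('a \<times> 'a) set \<Rightarrow> 'a \<Rightarrow> 'a \<Rightarrow> int" where
  "cv r x y = (if (x,y) \<in> r then 1 else 0) - (if (y,x) \<in> r then 1 else 0)"

definition cvp :: "'a profile \<Rightarrow> nat \<Rightarrow> 'a \<Rightarrow> 'a \<Rightarrow> int" where
  "cvp R i x y = (if prefers R i x y then 1 else 0) - (if prefers R i y x then 1 else 0)"

lemma g_sum:
  assumes "finite (electorate R)"
  shows "g R x y = (\<Sum>i\<in>electorate R. cvp R i x y)"
proof -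
  have c: "\<And>p. int (card {i \<in> electorate R. p i}) = (\<Sum>i\<in>electorate R. if p i then 1 else 0)"
    using assms by (simp add: sum.If_cases Int_def)
  show ?thesis unfolding g_def cvp_def c by (simp add: sum_subtractf)
qed

lemma g_anti: "g R x y = - g R y x"
  by (simp add: g_def)

lemma g_bound: "finite (electorate R) \<Longrightarrow> \<bar>g R x y\<bar> \<le> int (card (electorate R))"
proof -
  assume f: "finite (electorate R)"
  have "card {i \<in> electorate R. prefers R i x y} \<le> card (electorate R)"
    using f by (intro card_mono) auto
  moreover have "card {i \<in> electorate R. prefers R i y x} \<le> card (electorate R)"
    using f by (intro card_mono) auto
  ultimately show ?thesis unfolding g_def by linarith
qed

lemma electorate_upd: "electorate (R(i := Some r)) = insert i (electorate R)"
  by (auto simp: electorate_def)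

lemma cvp_upd_other: "j \<noteq> i \<Longrightarrow> cvp (R(i := Some r)) j x y = cvp R j x y"
  by (simp add: cvp_def prefers_def)

lemma cvp_upd_same: "cvp (R(i := Some r)) i x y = cv r x y"
  by (simp add: cvp_def prefers_def cv_def)

lemma g_upd:
  assumes "finite (electorate R)"
  shows "g (R(i := Some r)) x y = g R x y - (if i \<in> electorate R then cvp R i x y else 0) + cv r x y"
proof -
  have f2: "finite (electorate (R(i := Some r)))" using assms by (simp add: electorate_upd)
  have "g (R(i := Some r)) x y = (\<Sum>j\<in>insert i (electorate R). cvp (R(i := Some r)) j x y)"
    using g_sum[OF f2] by (simp add: electorate_upd)
  also have "\<dots> = cv r x y + (\<Sum>j\<in>electorate R - {i}. cvp R j x y)"
    using assms by (simp add: sum.insert_remove cvp_upd_same cvp_upd_other)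
  also have "(\<Sum>j\<in>electorate R - {i}. cvp R j x y) = g R x y - (if i \<in> electorate R then cvp R i x y else 0)"
    using assms g_sum[OF assms] by (simp add: sum_diff1)
  finally show ?thesis by linarith
qed

lemma cv_converse: "cv (r\<inverse>) x y = - cv r x y"
  by (simp add: cv_def)

lemma profile_upd:
  assumes "is_profile A R" "i > 0" "r \<subseteq> A \<times> A" "strict_linear_order_on A r"
  shows "is_profile A (R(i := Some r))"
  using assms unfolding is_profile_def by (auto simp: electorate_upd)

lemma slo_converse: "strict_linear_order_on A r \<Longrightarrow> strict_linear_order_on A (r\<inverse>)"
  unfolding strict_linear_order_on_def by (auto simp: irrefl_on_def total_on_def trans_def)

definition rk :: "'a set \<Rightarrow> ('a \<Rightarrow> nat) \<Rightarrow> ('a \<times> 'a) set" where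
  "rk A k = {(a,b). a \<in> A \<and> b \<in> A \<and> k a < k b}"

definition key :: "nat \<Rightarrow> ('a \<Rightarrow> nat) \<Rightarrow> ('a \<Rightarrow> nat) \<Rightarrow> 'a \<Rightarrow> nat" where
  "key N idx cl a = cl a * N + idx a"

lemma rk_sub: "rk A k \<subseteq> A \<times> A" by (auto simp: rk_def)

lemma rk_slo: "inj_on k A \<Longrightarrow> strict_linear_order_on A (rk A k)"
  unfolding strict_linear_order_on_def rk_def
  by (auto simp: irrefl_on_def total_on_def trans_def inj_on_def) (meson linorder_neqE_nat)

lemma key_inj:
  assumes "inj_on idx A" "\<forall>a\<in>A. idx a < N"
  shows "inj_on (key N idx cl) A"
proof (rule inj_onI)
  fix a b assume ab: "a \<in> A" "b \<in> A" "key N idx cl a = key N idx cl b"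
  then have "(cl a * N + idx a) mod N = (cl b * N + idx b) mod N" by (simp add: key_def)
  then have "idx a = idx b" using assms(2) ab by simp
  then show "a = b" using assms(1) ab by (auto simp: inj_on_def)
qed

lemma key_less:
  assumes "idx a < N" "cl a < cl b"
  shows "key N idx cl a < key N idx cl b"
proof -
  have "cl a * N + idx a < (cl a + 1) * N" using assms(1) by simp
  also have "\<dots> \<le> cl b * N" using assms(2) by (intro mult_le_mono1) simp
  finally show ?thesis by (simp add: key_def)
qed

lemma key_less_iff:
  assumes "idx a < N" "idx b < N"
  shows "key N idx cl a < key N idx cl b \<longleftrightarrow> cl a < cl b \<or> (cl a = cl b \<and> idx a < idx b)"
  using key_less[of idx a N cl b] key_less[of idx b N cl a] assms
  by (cases "cl a < cl b"; cases "cl b < cl a") (auto simp: key_def)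

lemma cv_rk:
  assumes "a \<in> A" "b \<in> A"
  shows "cv (rk A k) a b = (if k a < k b then 1 else if k b < k a then -1 else 0)"
  using assms by (auto simp: cv_def rk_def)

lemma fresh2:
  assumes "finite (E::nat set)"
  obtains i j where "i > 0" "j > 0" "i \<noteq> j" "i \<notin> E" "j \<notin> E"
proof -
  let ?M = "Max (insert 0 E)"
  have "\<forall>e\<in>E. e \<le> ?M" using assms by simp
  then show ?thesis by (intro that[of "?M + 1" "?M + 2"]) auto
qed

lemma idx_exists:
  assumes "finite A"
  obtains idx :: "'a \<Rightarrow> nat" and N where "inj_on idx A" "\<forall>a\<in>A. idx a < N"
  using finite_imp_inj_to_nat_seg[OF assms] by blast

lemma g_pair:
  assumes "finite (electorate Q)" "i \<notin> electorate Q" "j \<notin> electorate Q" "i \<noteq> j"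
  shows "g (Q(i := Some r, j := Some s)) x y = g Q x y + cv r x y + cv s x y"
proof -
  have f1: "finite (electorate (Q(i := Some r)))" using assms by (simp add: electorate_upd)
  have "j \<notin> electorate (Q(i := Some r))" using assms by (simp add: electorate_upd)
  then have 1: "g (Q(i := Some r, j := Some s)) x y = g (Q(i := Some r)) x y + cv s x y"
    using g_upd[OF f1, of j s x y] by simp
  have 2: "g (Q(i := Some r)) x y = g Q x y + cv r x y" using g_upd[OF assms(1), of i r x y] assms by simp
  show ?thesis using 1 2 by linarith
qed

lemma profile_pair:
  assumes "is_profile A Q" "i > 0" "j > 0" "r \<subseteq> A \<times> A" "strict_linear_order_on A r"
    "s \<subseteq> A \<times> A" "strict_linear_order_on A s"
  shows "is_profile A (Q(i := Some r, j := Some s))"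
  using assms by (intro profile_upd) auto

definition dl :: "'a \<Rightarrow> 'a \<Rightarrow> 'a \<Rightarrow> int" where
  "dl d a b = (if a \<noteq> d \<and> b = d then 1 else if a = d \<and> b \<noteq> d then -1 else 0)"

lemma move_cv:
  assumes "a \<in> A" "b \<in> A" "d \<in> A" "\<forall>x\<in>A. idx x < N"
    "\<forall>x\<in>A. x \<noteq> d \<longrightarrow> cl' x = cl x \<and> cl d < cl x \<and> cl x < cl' d"
  shows "cv (rk A (key N idx cl')) a b - cv (rk A (key N idx cl)) a b = 2 * dl d a b"
proof -
  have ia: "idx a < N" and ib: "idx b < N" and id: "idx d < N" using assms by auto
  show ?thesis
  proof (cases "a = b")
    case True then show ?thesis using assms by (simp add: cv_rk dl_def)
  next
    case False
    show ?thesis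
    proof (cases "b = d")
      case True
      with False have "a \<noteq> d" by simp
      then have "cl a < cl' d" "cl d < cl a" using assms(1,5) by auto
      then have "key N idx cl' a < key N idx cl' d" "key N idx cl d < key N idx cl a"
        using key_less[of idx a N cl' d] key_less[of idx d N cl a] ia id assms(1,5) \<open>a \<noteq> d\<close> by auto
      then show ?thesis using True \<open>a \<noteq> d\<close> assms by (simp add: cv_rk dl_def)
    next
      case bd: False
      show ?thesis
      proof (cases "a = d")
        case True
        then have "cl b < cl' d" "cl d < cl b" using assms(2,5) bd by auto
        then have "key N idx cl' b < key N idx cl' d" "key N idx cl d < key N idx cl b"
          using key_less[of idx b N cl' d] key_less[of idx d N cl b] ib id assms(2,5) bd by auto
        then show ?thesis using True bd assms by (simp add: cv_rk dl_def)
      next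
        case False
        then have "key N idx cl' a = key N idx cl a" "key N idx cl' b = key N idx cl b"
          using assms bd by (auto simp: key_def)
        then show ?thesis using False bd assms by (simp add: cv_rk dl_def)
      qed
    qed
  qed
qed

lemma fishburn_key:
  assumes "V \<subseteq> A" "U \<subseteq> A" "V \<noteq> U" "\<forall>x\<in>A. idx x < N"
    "\<forall>a\<in>V - U. \<forall>b\<in>U. cl a < cl b" "\<forall>a\<in>V. \<forall>b\<in>U - V. cl a < cl b"
  shows "fishburn (rk A (key N idx cl)) V U"
  unfolding fishburn_def rk_def using assms key_less[of idx _ N cl] by (auto 0 4)

lemma push_step:
  assumes "finite A" "is_scc A f" "pairwise_scc A f" "strategyproof A f"
    "is_profile A Q" "d \<in> A" "d \<notin> f Q"
  shows "\<exists>Q'. is_profile A Q' \<and> f Q' = f Q \<and> (\<forall>a\<in>A. \<forall>b\<in>A. g Q' a b = g Q a b + 2 * dl d a b)"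
proof -
  obtain idx :: "'a \<Rightarrow> nat" and N where idx: "inj_on idx A" "\<forall>a\<in>A. idx a < N"
    using idx_exists[OF assms(1)] by blast
  have finE: "finite (electorate Q)" using assms(5) by (simp add: is_profile_def)
  obtain i j where ij: "i > 0" "j > 0" "i \<noteq> j" "i \<notin> electorate Q" "j \<notin> electorate Q"
    using fresh2[OF finE] by blast
  let ?K = "\<lambda>cl. rk A (key N idx cl)"
  have slo: "\<And>cl. strict_linear_order_on A (?K cl)" by (rule rk_slo[OF key_inj[OF idx]])
  have sub: "\<And>cl. ?K cl \<subseteq> A \<times> A" by (rule rk_sub)
  have slo': "\<And>cl. strict_linear_order_on A ((?K cl)\<inverse>)" using slo by (rule slo_converse)
  have sub': "\<And>cl. (?K cl)\<inverse> \<subseteq> A \<times> A" using sub by blast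
  have prof: "\<And>cl cl'. is_profile A (Q(i := Some (?K cl), j := Some ((?K cl')\<inverse>)))"
    using profile_pair[OF assms(5) ij(1,2) sub slo sub' slo'] by blast
  have gp: "\<And>cl cl' x y. g (Q(i := Some (?K cl), j := Some ((?K cl')\<inverse>))) x y
      = g Q x y + cv (?K cl) x y - cv (?K cl') x y"
    using g_pair[OF finE ij(4,5,3)] by (simp add: cv_converse)
  define clw where "clw = (\<lambda>a. if a = d then 0 else 1::nat)"
  define clw' where "clw' = (\<lambda>a. if a = d then 2 else 1::nat)"
  define Qs where "Qs = Q(i := Some (?K clw'), j := Some ((?K clw)\<inverse>))"
  define U where "U = f Q"
  define V where "V = f Qs"
  have mvw: "\<forall>a\<in>A. \<forall>b\<in>A. g Qs a b = g Q a b + 2 * dl d a b"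
    using move_cv[OF _ _ assms(6) idx(2), where cl'=clw' and cl=clw] gp unfolding Qs_def
    by (auto simp: clw_def clw'_def)
  define clu where "clu = (\<lambda>a. if a = d then 0 else if a \<in> V - U then 1 else if a \<in> U \<inter> V then 2
      else if a \<in> U - V then 3 else 4::nat)"
  define clu' where "clu' = (\<lambda>a. if a = d then 5 else clu a)"
  define P where "P = Q(i := Some (?K clu), j := Some ((?K clu)\<inverse>))"
  define P' where "P' = Q(i := Some (?K clu'), j := Some ((?K clu)\<inverse>))"
  have "f P = f Q"
    using assms(3) prof unfolding pairwise_scc_def P_def
    by (metis assms(5) gp add.right_neutral diff_add_cancel add_diff_cancel_right')
  moreover have "f P' = f Qs"
  proof -
    have "\<forall>a\<in>A. \<forall>b\<in>A. g P' a b = g Qs a b"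
    proof (intro ballI)
      fix a b assume ab: "a \<in> A" "b \<in> A"
      have "cv (?K clu') a b - cv (?K clu) a b = 2 * dl d a b"
        using move_cv[OF ab assms(6) idx(2), where cl'=clu' and cl=clu] by (auto simp: clu_def clu'_def)
      then show "g P' a b = g Qs a b" using mvw ab gp unfolding P'_def by simp
    qed
    then show ?thesis using assms(3) prof unfolding pairwise_scc_def P'_def Qs_def by blast
  qed
  moreover have "\<not> fishburn (?K clu) (f P') (f P)"
  proof -
    have "P i = Some (?K clu)" "P' i \<noteq> None" "\<forall>k. k \<noteq> i \<longrightarrow> P' k = P k"
      using ij(3) by (auto simp: P_def P'_def)
    then show ?thesis using assms(4) prof unfolding strategyproof_def P_def P'_def by blast
  qed
  ultimately have nf: "\<not> fishburn (?K clu) V U" unfolding U_def V_def by simp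
  have VA: "V \<subseteq> A" "U \<subseteq> A" using assms(2) prof assms(5) unfolding is_scc_def U_def V_def Qs_def by auto
  have "V = U"
  proof (rule ccontr)
    assume "V \<noteq> U"
    have dU: "d \<notin> U" using assms(7) U_def by simp
    have "fishburn (?K clu) V U"
      by (rule fishburn_key[OF VA \<open>V \<noteq> U\<close> idx(2)]) (use dU in \<open>auto simp: clu_def\<close>)
    then show False using nf by simp
  qed
  then show ?thesis using mvw prof unfolding V_def U_def Qs_def by blast
qed

lemma push_iter:
  assumes "finite A" "is_scc A f" "pairwise_scc A f" "strategyproof A f"
    "is_profile A Q" "d \<in> A" "d \<notin> f Q"
  shows "\<exists>Q'. is_profile A Q' \<and> f Q' = f Q \<and> (\<forall>a\<in>A. \<forall>b\<in>A. g Q' a b = g Q a b + 2 * int n * dl d a b)"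
proof (induction n)
  case 0
  then show ?case using assms(5) by (intro exI[of _ Q]) simp
next
  case (Suc n)
  then obtain Q1 where Q1: "is_profile A Q1" "f Q1 = f Q" "\<forall>a\<in>A. \<forall>b\<in>A. g Q1 a b = g Q a b + 2 * int n * dl d a b"
    by blast
  obtain Q2 where Q2: "is_profile A Q2" "f Q2 = f Q1" "\<forall>a\<in>A. \<forall>b\<in>A. g Q2 a b = g Q1 a b + 2 * dl d a b"
    using push_step[OF assms(1-4) Q1(1) assms(6)] Q1(2) assms(7) by auto
  show ?case using Q1 Q2 by (intro exI[of _ Q2]) (auto simp: algebra_simps)
qed

lemma maj_strict_g: "maj_strict R x y \<longleftrightarrow> g R x y > 0"
  unfolding maj_strict_def maj_weak_def using g_anti[of R x y] by auto

lemma push_TC: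
  assumes "finite A" "is_scc A f" "pairwise_scc A f" "strategyproof A f"
    "is_profile A Q" "d \<in> TC A Q" "d \<notin> f Q" "2 \<le> card (TC A Q)"
    "\<forall>P. is_profile A P \<longrightarrow> card (TC A P) < card (TC A Q) \<longrightarrow> TC A P \<subseteq> f P"
    and Ane: "A \<noteq> {}"
  shows "\<exists>T. T \<subseteq> TC A Q - {d} \<and> T \<noteq> {} \<and> T \<subseteq> f Q \<and> (\<forall>t\<in>T. \<forall>b\<in>A - {d} - T. maj_strict Q t b)"
proof -
  let ?C = "TC A Q"
  have finC: "finite ?C" using card_ge_0_finite assms(8) by force
  note TCQ = TC_props[OF assms(1) Ane, of Q]
  have dA: "d \<in> A" using TCQ assms(6) by (auto simp: dominant_def)
  define n where "n = card (electorate Q) + 1"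
  obtain Q' where Q': "is_profile A Q'" "f Q' = f Q" "\<forall>a\<in>A. \<forall>b\<in>A. g Q' a b = g Q a b + 2 * int n * dl d a b"
    using push_iter[OF assms(1-5) dA assms(7)] by blast
  have finE: "finite (electorate Q)" using assms(5) by (simp add: is_profile_def)
  have same: "\<And>a b. a \<in> A \<Longrightarrow> b \<in> A \<Longrightarrow> a \<noteq> d \<Longrightarrow> b \<noteq> d \<Longrightarrow> maj_strict Q' a b \<longleftrightarrow> maj_strict Q a b"
    using Q'(3) by (simp add: maj_strict_g dl_def)
  have dom: "dominant A Q' (?C - {d})"
    unfolding dominant_def
  proof (intro conjI ballI)
    have "card (?C - {d}) \<ge> 1" using assms(6,8) finC by simp
    then show "?C - {d} \<noteq> {}" by (metis card.empty not_one_le_zero)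
    show "?C - {d} \<subseteq> A" using TCQ by (auto simp: dominant_def)
  next
    fix x b assume x: "x \<in> ?C - {d}" and b: "b \<in> A - (?C - {d})"
    have xA: "x \<in> A" using x TCQ by (auto simp: dominant_def)
    show "maj_strict Q' x b"
    proof (cases "b = d")
      case True
      have "\<bar>g Q x d\<bar> \<le> int (card (electorate Q))" by (rule g_bound[OF finE])
      moreover have "\<bar>g Q d x\<bar> \<le> int (card (electorate Q))" by (rule g_bound[OF finE])
      moreover have "x \<noteq> d" using x by simp
      moreover have "g Q' x d = g Q x d + 2 * int n" "g Q' d x = g Q d x - 2 * int n"
        using Q'(3) xA dA \<open>x \<noteq> d\<close> by (auto simp: dl_def)
      moreover have "int n = int (card (electorate Q)) + 1" by (simp add: n_def)
      ultimately have "0 \<le> g Q' x d \<and> \<not> 0 \<le> g Q' d x" by linarith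
      then show ?thesis using True unfolding maj_strict_def maj_weak_def by simp
    next
      case False
      then have "maj_strict Q x b" using TCQ x b by (auto simp: dominant_def)
      then show ?thesis using same[of x b] xA b x False by auto
    qed
  qed
  have Ane': "A \<noteq> {}" by (rule Ane)
  note TCQ' = TC_props[OF assms(1) Ane, of Q']
  let ?T = "TC A Q'"
  have Tsub: "?T \<subseteq> ?C - {d}" using TCQ' dom by blast
  have "card ?T < card ?C"
  proof (rule psubset_card_mono[OF finC])
    show "?T \<subset> ?C" using Tsub assms(6) by blast
  qed
  then have "?T \<subseteq> f Q'" using assms(9) Q'(1) by blast
  moreover have "?T \<noteq> {}" using TCQ' by (simp add: dominant_def)
  moreover have "\<forall>t\<in>?T. \<forall>b\<in>A - {d} - ?T. maj_strict Q t b"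
  proof (intro ballI)
    fix t b assume t: "t \<in> ?T" and b: "b \<in> A - {d} - ?T"
    have "maj_strict Q' t b" using TCQ' t b by (auto simp: dominant_def)
    moreover have "t \<in> A" "t \<noteq> d" using Tsub t TCQ by (auto simp: dominant_def)
    ultimately show "maj_strict Q t b" using same[of t b] b by auto
  qed
  ultimately show ?thesis using Tsub Q'(2) by (intro exI[of _ ?T]) auto
qed

lemma two_unchosen:
  assumes "finite A" "is_scc A f" "pairwise_scc A f" "strategyproof A f"
    "is_profile A Q" "y \<in> TC A Q" "z \<in> TC A Q" "y \<noteq> z" "y \<notin> f Q" "z \<notin> f Q"
    "2 \<le> card (TC A Q)"
    "\<forall>P. is_profile A P \<longrightarrow> card (TC A P) < card (TC A Q) \<longrightarrow> TC A P \<subseteq> f P"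
    "A \<noteq> {}"
  shows False
proof -
  let ?C = "TC A Q"
  note TCQ = TC_props[OF assms(1,13), of Q]
  have CA: "?C \<subseteq> A" using TCQ by (simp add: dominant_def)
  obtain T2 where T2: "T2 \<subseteq> ?C - {y}" "T2 \<noteq> {}" "T2 \<subseteq> f Q" "\<forall>t\<in>T2. \<forall>b\<in>A - {y} - T2. maj_strict Q t b"
    using push_TC[OF assms(1-5,6,9,11,12,13)] by blast
  obtain T1 where T1: "T1 \<subseteq> ?C - {z}" "T1 \<noteq> {}" "T1 \<subseteq> f Q" "\<forall>t\<in>T1. \<forall>b\<in>A - {z} - T1. maj_strict Q t b"
    using push_TC[OF assms(1-5,7,10,11,12,13)] by blast
  have yT1: "y \<notin> T1" using T1(3) assms(9) by blast
  have zT2: "z \<notin> T2" using T2(3) assms(10) by blast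
  have chain: "T1 \<subseteq> T2 \<or> T2 \<subseteq> T1"
  proof (rule ccontr)
    assume "\<not> (T1 \<subseteq> T2 \<or> T2 \<subseteq> T1)"
    then obtain t s where t: "t \<in> T1" "t \<notin> T2" and s: "s \<in> T2" "s \<notin> T1" by blast
    have "maj_strict Q s t" using T2(4) s t T1(1) CA yT1 by blast
    moreover have "maj_strict Q t s" using T1(4) s t T2(1) CA zT2 by blast
    ultimately show False using maj_strict_asym by metis
  qed
  then show False
  proof
    assume sub: "T1 \<subseteq> T2"
    have "dominant A Q T1" unfolding dominant_def
    proof (intro conjI ballI)
      show "T1 \<noteq> {}" "T1 \<subseteq> A" using T1 CA by auto
    next
      fix t b assume t: "t \<in> T1" and b: "b \<in> A - T1"
      show "maj_strict Q t b"
      proof (cases "b = z")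
        case True then show ?thesis using T2(4) sub t zT2 assms(7,8) CA by blast
      next
        case False then show ?thesis using T1(4) t b by blast
      qed
    qed
    then show False using TCQ assms(6) yT1 by blast
  next
    assume sub: "T2 \<subseteq> T1"
    have "dominant A Q T2" unfolding dominant_def
    proof (intro conjI ballI)
      show "T2 \<noteq> {}" "T2 \<subseteq> A" using T2 CA by auto
    next
      fix t b assume t: "t \<in> T2" and b: "b \<in> A - T2"
      show "maj_strict Q t b"
      proof (cases "b = y")
        case True then show ?thesis using T1(4) sub t yT1 assms(6,8) CA by blast
      next
        case False then show ?thesis using T2(4) t b by blast
      qed
    qed
    then show False using TCQ assms(7) zT2 by blast
  qed
qed

lemma swap_step:
  assumes "finite A" "is_scc A f" "pairwise_scc A f" "strategyproof A f"
    "is_profile A R" "is_profile A R'" "X \<subseteq> f R" "y \<in> f R" "y \<notin> X" "X \<subseteq> A" "y \<in> A"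
    "\<forall>a\<in>A. \<forall>b\<in>A. g R' a b = g R a b + (if a \<in> X \<and> b = y then 2 else if a = y \<and> b \<in> X then -2 else 0)"
    "f R \<noteq> f R'"
  shows "y \<notin> f R'"
proof
  assume yS': "y \<in> f R'"
  obtain idx :: "'a \<Rightarrow> nat" and N where idx: "inj_on idx A" "\<forall>a\<in>A. idx a < N"
    using idx_exists[OF assms(1)] by blast
  have finE: "finite (electorate R)" using assms(5) by (simp add: is_profile_def)
  obtain i j where ij: "i > 0" "j > 0" "i \<noteq> j" "i \<notin> electorate R" "j \<notin> electorate R"
    using fresh2[OF finE] by blast
  let ?K = "\<lambda>cl. rk A (key N idx cl)"
  have slo: "\<And>cl. strict_linear_order_on A (?K cl)" by (rule rk_slo[OF key_inj[OF idx]])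
  have sub: "\<And>cl. ?K cl \<subseteq> A \<times> A" by (rule rk_sub)
  have slo': "\<And>cl. strict_linear_order_on A ((?K cl)\<inverse>)" using slo by (rule slo_converse)
  have sub': "\<And>cl. (?K cl)\<inverse> \<subseteq> A \<times> A" using sub by blast
  have prof: "\<And>cl cl'. is_profile A (R(i := Some (?K cl), j := Some ((?K cl')\<inverse>)))"
    using profile_pair[OF assms(5) ij(1,2) sub slo sub' slo'] by blast
  have gp: "\<And>cl cl' x y. g (R(i := Some (?K cl), j := Some ((?K cl')\<inverse>))) x y
      = g R x y + cv (?K cl) x y - cv (?K cl') x y"
    using g_pair[OF finE ij(4,5,3)] by (simp add: cv_converse)
  define S where "S = f R"
  define S' where "S' = f R'"
  define cl where "cl = (\<lambda>a. if a = y then 4 else if a \<in> X then (if a \<in> S' then 6 else 8)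
     else if a \<in> S' - S then 0 else if a \<in> S \<inter> S' then 2 else 10::nat)"
  define cl' where "cl' = (\<lambda>a. if a = y then 9 else cl a)"
  define P where "P = R(i := Some (?K cl), j := Some ((?K cl)\<inverse>))"
  define P' where "P' = R(i := Some (?K cl'), j := Some ((?K cl)\<inverse>))"
  have diff: "cv (?K cl') a b - cv (?K cl) a b = (if a \<in> X \<and> b = y then 2 else if a = y \<and> b \<in> X then -2 else 0)"
    if ab: "a \<in> A" "b \<in> A" for a b
  proof -
    have ia: "idx a < N" and ib: "idx b < N" using ab idx by auto
    have iy: "idx y < N" using idx(2) assms(11) by blast
    have ky: "key N idx cl' u = key N idx cl u" if "u \<noteq> y" for u
      using that by (simp add: key_def cl'_def)
    consider "a = b" | "a \<noteq> b" "a = y" | "a \<noteq> b" "b = y" | "a \<noteq> y" "b \<noteq> y" by blast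
    then show ?thesis
    proof cases
      case 1 then show ?thesis using ab assms(9) by (auto simp: cv_rk)
    next
      case 2
      show ?thesis
      proof (cases "b \<in> X")
        case True
        have "cl y < cl b" "cl' b < cl' y" using True 2 by (auto simp: cl_def cl'_def)
        then have "key N idx cl y < key N idx cl b" "key N idx cl' b < key N idx cl' y"
          using key_less[of idx y N cl b] key_less[of idx b N cl' y] ib iy by auto
        then show ?thesis using 2 True ab assms(9) by (simp add: cv_rk)
      next
        case False
        have "cl b < cl y \<and> cl' b < cl' y \<or> cl y < cl b \<and> cl' y < cl' b"
          using False 2 by (auto simp: cl_def cl'_def)
        then have "key N idx cl b < key N idx cl y \<and> key N idx cl' b < key N idx cl' y \<or>
            key N idx cl y < key N idx cl b \<and> key N idx cl' y < key N idx cl' b"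
          using key_less[of idx y N cl b] key_less[of idx b N cl' y]
            key_less[of idx b N cl y] key_less[of idx y N cl' b] ib iy by blast
        then show ?thesis using 2 False ab by (auto simp: cv_rk)
      qed
    next
      case 3
      show ?thesis
      proof (cases "a \<in> X")
        case True
        have "cl y < cl a" "cl' a < cl' y" using True 3 by (auto simp: cl_def cl'_def)
        then have "key N idx cl y < key N idx cl a" "key N idx cl' a < key N idx cl' y"
          using key_less[of idx y N cl a] key_less[of idx a N cl' y] ia iy by auto
        then show ?thesis using 3 True ab by (simp add: cv_rk)
      next
        case False
        have "cl a < cl y \<and> cl' a < cl' y \<or> cl y < cl a \<and> cl' y < cl' a"
          using False 3 by (auto simp: cl_def cl'_def)
        then have "key N idx cl a < key N idx cl y \<and> key N idx cl' a < key N idx cl' y \<or>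
            key N idx cl y < key N idx cl a \<and> key N idx cl' y < key N idx cl' a"
          using key_less[of idx y N cl a] key_less[of idx a N cl' y]
            key_less[of idx a N cl y] key_less[of idx y N cl' a] ia iy by blast
        then show ?thesis using 3 False ab by (auto simp: cv_rk)
      qed
    next
      case 4
      then show ?thesis using ab ky[of a] ky[of b] by (simp add: cv_rk)
    qed
  qed
  have "f P = f R"
    using assms(3) prof unfolding pairwise_scc_def P_def
    by (metis assms(5) gp add.right_neutral diff_add_cancel add_diff_cancel_right')
  moreover have "f P' = f R'"
  proof -
    have "\<forall>a\<in>A. \<forall>b\<in>A. g P' a b = g R' a b"
    proof (intro ballI)
      fix a b assume ab: "a \<in> A" "b \<in> A"
      show "g P' a b = g R' a b" using diff[OF ab] assms(12) ab gp unfolding P'_def by simp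
    qed
    then show ?thesis using assms(3,6) prof unfolding pairwise_scc_def P'_def by blast
  qed
  moreover have "\<not> fishburn (?K cl) (f P') (f P)"
  proof -
    have "P i = Some (?K cl)" "P' i \<noteq> None" "\<forall>k. k \<noteq> i \<longrightarrow> P' k = P k"
      using ij(3) by (auto simp: P_def P'_def)
    then show ?thesis using assms(4) prof unfolding strategyproof_def P_def P'_def by blast
  qed
  ultimately have nf: "\<not> fishburn (?K cl) S' S" unfolding S_def S'_def by simp
  have VA: "S' \<subseteq> A" "S \<subseteq> A" using assms(2,5,6) unfolding is_scc_def S_def S'_def by auto
  have ne: "S' \<noteq> S" using assms(13) S_def S'_def by simp
  have "fishburn (?K cl) S' S"
    by (rule fishburn_key[OF VA ne idx(2)]) (use yS' assms(7,8) in \<open>auto simp: cl_def S_def S'_def\<close>)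
  then show False using nf by simp
qed

lemma kf_prop:
  assumes "finite A" "A \<noteq> {}"
  shows "\<forall>P. is_profile A P \<longrightarrow> card (TC A P) < kf A f \<longrightarrow> TC A P \<subseteq> f P"
proof -
  define K where "K = {k \<in> {1..card A + 1}. \<forall>R. is_profile A R \<longrightarrow> card (TC A R) < k \<longrightarrow> TC A R \<subseteq> f R}"
  have "1 \<in> K" unfolding K_def
  proof (simp, intro allI impI)
    fix R assume "is_profile A R" "card (TC A R) = 0"
    moreover have "dominant A R (TC A R)" using TC_props[OF assms] by blast
    moreover have "finite (TC A R)" using calculation(3) assms(1) by (auto simp: dominant_def intro: finite_subset)
    ultimately show "TC A R \<subseteq> f R" by (simp add: dominant_def)
  qed
  moreover have "finite K" unfolding K_def by simp
  ultimately have "Max K \<in> K" by (intro Max_in) auto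
  then show ?thesis unfolding kf_def K_def[symmetric] by (simp add: K_def)
qed

theorem lemma9:
  fixes A :: "'a set" and f :: "'a profile \<Rightarrow> 'a set" and R R' :: "'a profile"
    and X :: "'a set" and y :: 'a
  assumes "finite A"
    and "is_scc A f"
    and "pairwise_scc A f"
    and "strongly_condorcet_consistent A f"
    and "homogeneous A f"
    and "strategyproof A f"
    and "4 \<le> kf A f" and "kf A f \<le> card A"
    and "is_profile A R" and "is_profile A R'"
    and "TC A R = TC A R'"
    and "card (TC A R) = kf A f"
    and "X \<subseteq> f R \<inter> TC A R"
    and "y \<in> (f R \<inter> TC A R) - X"
    and "\<forall>x\<in>X. g R' x y = 2 + g R x y"
    and "\<forall>x'\<in>A. \<forall>y'\<in>A. \<not> (x' \<in> X \<and> y' = y) \<and> \<not> (x' = y \<and> y' \<in> X)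
           \<longrightarrow> g R' x' y' = g R x' y'"
  shows "f R = f R' \<or> f R' \<inter> TC A R' = TC A R' - {y}"
proof (cases "f R = f R'")
  case True then show ?thesis by simp
next
  case False
  have Ane: "A \<noteq> {}" using assms(7,8) by auto
  have fRA: "f R \<subseteq> A" using assms(2,9) by (simp add: is_scc_def)
  have XA: "X \<subseteq> A" and yA: "y \<in> A" using assms(13,14) fRA by auto
  have gh: "\<forall>a\<in>A. \<forall>b\<in>A. g R' a b = g R a b + (if a \<in> X \<and> b = y then 2 else if a = y \<and> b \<in> X then -2 else 0)"
  proof (intro ballI)
    fix a b assume ab: "a \<in> A" "b \<in> A"
    show "g R' a b = g R a b + (if a \<in> X \<and> b = y then 2 else if a = y \<and> b \<in> X then -2 else 0)"
    proof (cases "a \<in> X \<and> b = y")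
      case True then show ?thesis using assms(15) by simp
    next
      case F1: False
      show ?thesis
      proof (cases "a = y \<and> b \<in> X")
        case True
        then have "g R' b a = 2 + g R b a" using assms(15) by simp
        then show ?thesis using True F1 g_anti[of R' a b] g_anti[of R a b] by simp
      next
        case False then show ?thesis using F1 assms(16) ab by simp
      qed
    qed
  qed
  have yS': "y \<notin> f R'"
    by (rule swap_step[OF assms(1,2,3,6,9,10) _ _ _ XA yA gh False]) (use assms(13,14) in auto)
  have Hk: "\<forall>P. is_profile A P \<longrightarrow> card (TC A P) < card (TC A R') \<longrightarrow> TC A P \<subseteq> f P"
    using kf_prop[OF assms(1) Ane, of f] assms(11,12) by simp
  have "TC A R' - {y} \<subseteq> f R'"
  proof
    fix z assume z: "z \<in> TC A R' - {y}"
    show "z \<in> f R'"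
    proof (rule ccontr)
      assume "z \<notin> f R'"
      show False
        by (rule two_unchosen[OF assms(1,2,3,6,10) _ _ _ yS' \<open>z \<notin> f R'\<close> _ Hk Ane])
           (use z assms(7,11,12,14) in auto)
    qed
  qed
  then show ?thesis using yS' by blast
qed

end
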